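(* Let $L$ be a pretransitive logic, $k\le\omega$, and let $\mathfrak F=(W,(R_i)_{i<n})$ be the $k$-canonical frame of $L$. If $x\in W$ and $\varphi$ is a $k$-formula with $\varphi\in x$, then the set $R^*_{\mathfrak F}(x)\cap\{y\in W\mid \varphi\in y\}$ has a maximal element.
   Context: Logics are normal $n$-modal logics (sets of formulas over $p_0,p_1,\dots$, $\to,\bot$, $\Diamond_i$ ($i<n$), containing tautologies, $\Diamond_i(p\vee q)\to\Diamond_ip\vee\Diamond_iq$, $\neg\Diamond_i\bot$, closed under modus ponens, substitution and monotonicity). A $k$-formula uses only variables $p_j$, $j<k$. With $\Diamond^0\varphi=\varphi$, $\Diamond^{i+1}\varphi=\Diamond^i(\bigvee_{j<n}\Diamond_j\varphi)$, $\Diamond^{\le m}\varphi=\bigvee_{i\le m}\Diamond^i\varphi$, a logic is pretransitive if it contains $\Diamond^{m+1}p\to\Diamond^{\le m}p$ for some $m$. For a consistent logic $L$, the $k$-canonical frame has as points the maximal $L$-consistent sets of $k$-formulas, with $xR_iy$ iff $\Diamond_i\psi\in x$ for every $k$-formula $\psi\in y$. For a frame, $R_{\mathfrak F}=\bigcup_{i<n}R_i$, $R^*_{\mathfrak F}$ is its reflexive transitive closure, and $R^*_{\mathfrak F}(x)=\{y\mid xR^*_{\mathfrak F}y\}$. An element $x$ of a subset $V\subseteq W$ is a maximal element of $V$ if for all $y\in V$, $xR^*_{\mathfrak F}y$ implies $yR^*_{\mathfrak F}x$. *)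

theory Defs
  imports Main "HOL-Library.Extended_Nat"
begin

datatype fm = Var nat | Bot | Imp fm fm | Dia nat fm

definition Neg :: "fm \<Rightarrow> fm" where "Neg a = Imp a Bot"
definition Top :: fm where "Top = Imp Bot Bot"
definition Or :: "fm \<Rightarrow> fm \<Rightarrow> fm" where "Or a b = Imp (Neg a) b"
definition And :: "fm \<Rightarrow> fm \<Rightarrow> fm" where "And a b = Neg (Imp a (Neg b))"

fun Disj :: "fm list \<Rightarrow> fm" where
  "Disj [] = Bot"
| "Disj (a # as) = Or a (Disj as)"

fun Conj :: "fm list \<Rightarrow> fm" where
  "Conj [] = Top"
| "Conj (a # as) = And a (Conj as)"

fun vars :: "fm \<Rightarrow> nat set" where
  "vars (Var j) = {j}"
| "vars Bot = {}"
| "vars (Imp a b) = vars a \<union> vars b"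
| "vars (Dia i a) = vars a"

fun mods :: "fm \<Rightarrow> nat set" where
  "mods (Var j) = {}"
| "mods Bot = {}"
| "mods (Imp a b) = mods a \<union> mods b"
| "mods (Dia i a) = insert i (mods a)"

definition nfm :: "nat \<Rightarrow> fm \<Rightarrow> bool" where
  "nfm n a \<longleftrightarrow> (\<forall>i\<in>mods a. i < n)"

definition kfm :: "nat \<Rightarrow> enat \<Rightarrow> fm \<Rightarrow> bool" where
  "kfm n k a \<longleftrightarrow> nfm n a \<and> (\<forall>j\<in>vars a. enat j < k)"

fun subst :: "(nat \<Rightarrow> fm) \<Rightarrow> fm \<Rightarrow> fm" where
  "subst s (Var j) = s j"
| "subst s Bot = Bot"
| "subst s (Imp a b) = Imp (subst s a) (subst s b)"
| "subst s (Dia i a) = Dia i (subst s a)"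

fun peval :: "(nat \<Rightarrow> bool) \<Rightarrow> fm \<Rightarrow> bool" where
  "peval v (Var j) = v j"
| "peval v Bot = False"
| "peval v (Imp a b) = (peval v a \<longrightarrow> peval v b)"
| "peval v (Dia i a) = False"

definition tautology :: "fm \<Rightarrow> bool" where
  "tautology a \<longleftrightarrow> mods a = {} \<and> (\<forall>v. peval v a)"

definition normal_logic :: "nat \<Rightarrow> fm set \<Rightarrow> bool" where
  "normal_logic n L \<longleftrightarrow>
     (\<forall>a\<in>L. nfm n a)
   \<and> (\<forall>a. tautology a \<longrightarrow> a \<in> L)
   \<and> (\<forall>i<n. Imp (Dia i (Or (Var 0) (Var 1))) (Or (Dia i (Var 0)) (Dia i (Var 1))) \<in> L)
   \<and> (\<forall>i<n. Neg (Dia i Bot) \<in> L)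
   \<and> (\<forall>a b. a \<in> L \<longrightarrow> Imp a b \<in> L \<longrightarrow> b \<in> L)
   \<and> (\<forall>s a. (\<forall>j. nfm n (s j)) \<longrightarrow> a \<in> L \<longrightarrow> subst s a \<in> L)
   \<and> (\<forall>i<n. \<forall>a b. Imp a b \<in> L \<longrightarrow> Imp (Dia i a) (Dia i b) \<in> L)"

definition consistent_logic :: "fm set \<Rightarrow> bool" where
  "consistent_logic L \<longleftrightarrow> Bot \<notin> L"

fun diam_pow :: "nat \<Rightarrow> nat \<Rightarrow> fm \<Rightarrow> fm" where
  "diam_pow n 0 a = a"
| "diam_pow n (Suc i) a = diam_pow n i (Disj (map (\<lambda>j. Dia j a) [0..<n]))"

definition diam_le :: "nat \<Rightarrow> nat \<Rightarrow> fm \<Rightarrow> fm" where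
  "diam_le n m a = Disj (map (\<lambda>i. diam_pow n i a) [0..<Suc m])"

definition pretransitive :: "nat \<Rightarrow> fm set \<Rightarrow> bool" where
  "pretransitive n L \<longleftrightarrow>
     (\<exists>m. Imp (diam_pow n (Suc m) (Var 0)) (diam_le n m (Var 0)) \<in> L)"

definition L_consistent :: "fm set \<Rightarrow> fm set \<Rightarrow> bool" where
  "L_consistent L X \<longleftrightarrow> (\<forall>as. set as \<subseteq> X \<longrightarrow> Neg (Conj as) \<notin> L)"

definition max_cons :: "nat \<Rightarrow> fm set \<Rightarrow> enat \<Rightarrow> fm set \<Rightarrow> bool" where
  "max_cons n L k X \<longleftrightarrow>
     X \<subseteq> {a. kfm n k a} \<and> L_consistent L X
   \<and> (\<forall>Y. X \<subseteq> Y \<longrightarrow> Y \<subseteq> {a. kfm n k a} \<longrightarrow> L_consistent L Y \<longrightarrow> Y = X)"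

definition can_W :: "nat \<Rightarrow> fm set \<Rightarrow> enat \<Rightarrow> fm set set" where
  "can_W n L k = {X. max_cons n L k X}"

definition can_R :: "nat \<Rightarrow> fm set \<Rightarrow> enat \<Rightarrow> nat \<Rightarrow> fm set \<Rightarrow> fm set \<Rightarrow> bool" where
  "can_R n L k i x y \<longleftrightarrow>
     x \<in> can_W n L k \<and> y \<in> can_W n L k \<and> (\<forall>a. kfm n k a \<longrightarrow> a \<in> y \<longrightarrow> Dia i a \<in> x)"

definition can_Rstar :: "nat \<Rightarrow> fm set \<Rightarrow> enat \<Rightarrow> (fm set \<times> fm set) set" where
  "can_Rstar n L k = {(x, y). \<exists>i<n. can_R n L k i x y}\<^sup>*"

definition max_elem :: "('w \<times> 'w) set \<Rightarrow> 'w set \<Rightarrow> 'w \<Rightarrow> bool" where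
  "max_elem Rs V x \<longleftrightarrow> x \<in> V \<and> (\<forall>y\<in>V. (x, y) \<in> Rs \<longrightarrow> (y, x) \<in> Rs)"

end

theory Submission
  imports Defs "HOL-Library.Countable"
begin

instance fm :: countable by countable_datatype

fun peval2 :: "(fm \<Rightarrow> bool) \<Rightarrow> fm \<Rightarrow> bool" where
  "peval2 V (Var j) = V (Var j)"
| "peval2 V Bot = False"
| "peval2 V (Imp a b) = (peval2 V a \<longrightarrow> peval2 V b)"
| "peval2 V (Dia i a) = V (Dia i a)"

fun skel :: "fm \<Rightarrow> fm" where
  "skel (Var j) = Var (to_nat (Var j))"
| "skel Bot = Bot"
| "skel (Imp a b) = Imp (skel a) (skel b)"
| "skel (Dia i a) = Var (to_nat (Dia i a))"

lemma mods_skel: "mods (skel a) = {}"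
  by (induction a) auto

lemma peval_skel: "peval v (skel a) = peval2 (v \<circ> to_nat) a"
  by (induction a) auto

lemma nfm_simps[simp]:
  "nfm n (Var j)" "nfm n Bot" "nfm n (Imp a b) = (nfm n a \<and> nfm n b)"
  "nfm n (Dia i a) = (i < n \<and> nfm n a)"
  by (auto simp: nfm_def)

lemma kfm_simps[simp]:
  "kfm n k Bot" "kfm n k (Imp a b) = (kfm n k a \<and> kfm n k b)"
  "kfm n k (Dia i a) = (i < n \<and> kfm n k a)"
  by (auto simp: kfm_def)

lemma kfm_nfm: "kfm n k a \<Longrightarrow> nfm n a"
  by (simp add: kfm_def)

lemma subst_skel:
  assumes "nfm n a"
  shows "subst (\<lambda>j. if nfm n (from_nat j) then from_nat j else Var j) (skel a) = a"
  using assms by (induction a) auto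

lemma peval2_simps[simp]:
  "peval2 V (Neg a) = (\<not> peval2 V a)"
  "peval2 V Top"
  "peval2 V (Or a b) = (peval2 V a \<or> peval2 V b)"
  "peval2 V (And a b) = (peval2 V a \<and> peval2 V b)"
  "peval2 V (Conj as) = (\<forall>a\<in>set as. peval2 V a)"
  "peval2 V (Disj as) = (\<exists>a\<in>set as. peval2 V a)"
  by (auto simp: Neg_def Top_def Or_def And_def; induction as; auto simp: Neg_def Top_def Or_def And_def)+

lemma nfm_simps2[simp]:
  "nfm n (Neg a) = nfm n a" "nfm n Top"
  "nfm n (Or a b) = (nfm n a \<and> nfm n b)"
  "nfm n (And a b) = (nfm n a \<and> nfm n b)"
  "nfm n (Conj as) = (\<forall>a\<in>set as. nfm n a)"
  "nfm n (Disj as) = (\<forall>a\<in>set as. nfm n a)"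
  by (auto simp: Neg_def Top_def Or_def And_def; induction as; auto simp: Neg_def Top_def Or_def And_def)+

lemma kfm_simps2[simp]:
  "kfm n k (Neg a) = kfm n k a" "kfm n k Top"
  "kfm n k (Or a b) = (kfm n k a \<and> kfm n k b)"
  "kfm n k (And a b) = (kfm n k a \<and> kfm n k b)"
  "kfm n k (Conj as) = (\<forall>a\<in>set as. kfm n k a)"
  "kfm n k (Disj as) = (\<forall>a\<in>set as. kfm n k a)"
  by (auto simp: Neg_def Top_def Or_def And_def; induction as; auto simp: Neg_def Top_def Or_def And_def)+

definition dd :: "nat \<Rightarrow> fm \<Rightarrow> fm" where
  "dd n a = Disj (map (\<lambda>j. Dia j a) [0..<n])"

lemma diam_pow_Suc': "diam_pow n (Suc l) a = dd n (diam_pow n l a)"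
  by (induction l arbitrary: a) (auto simp: dd_def)

lemma diam_pow_Suc2: "diam_pow n (Suc l) a = diam_pow n l (dd n a)"
  by (simp add: dd_def)

lemma diam_pow_add: "diam_pow n (i + r) a = diam_pow n i (diam_pow n r a)"
proof (induction i arbitrary: a)
  case 0 then show ?case by simp
next
  case (Suc i)
  have "diam_pow n (Suc i + r) a = dd n (diam_pow n (i + r) a)"
    by (simp only: add_Suc diam_pow_Suc')
  also have "\<dots> = dd n (diam_pow n i (diam_pow n r a))" using Suc by simp
  also have "\<dots> = diam_pow n (Suc i) (diam_pow n r a)" by (simp only: diam_pow_Suc')
  finally show ?case .
qed

lemma kfm_dd[simp]: "kfm n k (dd n a) = (n = 0 \<or> kfm n k a)"
  by (auto simp: dd_def)

lemma kfm_diam_pow: "kfm n k a \<Longrightarrow> kfm n k (diam_pow n l a)"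
  by (induction l arbitrary: a) (auto simp: dd_def)

lemma nfm_diam_pow: "nfm n a \<Longrightarrow> nfm n (diam_pow n l a)"
  by (induction l arbitrary: a) (auto)

lemma nfm_dd: "nfm n a \<Longrightarrow> nfm n (dd n a)"
  by (auto simp: dd_def)

lemma peval2_dd: "peval2 V (dd n a) = (\<exists>j<n. V (Dia j a))"
  by (auto simp: dd_def)

lemma subst_Or: "subst s (Or a b) = Or (subst s a) (subst s b)"
  by (simp add: Or_def Neg_def)

lemma subst_Disj: "subst s (Disj xs) = Disj (map (subst s) xs)"
  by (induction xs) (auto simp: Or_def Neg_def)

lemma subst_diam_pow: "subst s (diam_pow n i a) = diam_pow n i (subst s a)"
  by (induction i arbitrary: a) (auto simp: subst_Disj comp_def)


locale NL =
  fixes n :: nat and L :: "fm set" and k :: enat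
  assumes normal: "normal_logic n L" and cons: "consistent_logic L"
begin

lemma L_nfm: "a \<in> L \<Longrightarrow> nfm n a"
  using normal unfolding normal_logic_def by blast

lemma mp: "a \<in> L \<Longrightarrow> Imp a b \<in> L \<Longrightarrow> b \<in> L"
  using normal unfolding normal_logic_def by blast

lemma mono_Dia: "i < n \<Longrightarrow> Imp a b \<in> L \<Longrightarrow> Imp (Dia i a) (Dia i b) \<in> L"
  using normal unfolding normal_logic_def by blast

lemma taut_L: "tautology a \<Longrightarrow> a \<in> L"
  using normal unfolding normal_logic_def by blast

lemma ax_K: "i < n \<Longrightarrow> Imp (Dia i (Or (Var 0) (Var 1))) (Or (Dia i (Var 0)) (Dia i (Var 1))) \<in> L"
  using normal unfolding normal_logic_def by blast

lemma ax_N: "i < n \<Longrightarrow> Neg (Dia i Bot) \<in> L"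
  using normal unfolding normal_logic_def by blast

lemma subst_L: "(\<And>j. nfm n (s j)) \<Longrightarrow> a \<in> L \<Longrightarrow> subst s a \<in> L"
  using normal unfolding normal_logic_def by blast

lemma taut: assumes "nfm n a" "\<And>V. peval2 V a" shows "a \<in> L"
proof -
  have "tautology (skel a)"
    unfolding tautology_def using assms(2) by (simp add: mods_skel peval_skel)
  then have "skel a \<in> L" by (rule taut_L)
  then have "subst (\<lambda>j. if nfm n (from_nat j) then from_nat j else Var j) (skel a) \<in> L"
    by (intro subst_L) auto
  then show ?thesis using subst_skel[OF assms(1)] by simp
qed

lemma conseq:
  assumes "set cs \<subseteq> L" "nfm n d" "\<And>V. (\<forall>c\<in>set cs. peval2 V c) \<Longrightarrow> peval2 V d"
  shows "d \<in> L"
  using assms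
proof (induction cs arbitrary: d)
  case Nil
  show ?case by (rule taut[OF Nil.prems(2)]) (use Nil.prems(3) in simp)
next
  case (Cons c cs)
  have cL: "c \<in> L" using Cons.prems(1) by simp
  have "Imp c d \<in> L"
  proof (rule Cons.IH)
    show "set cs \<subseteq> L" using Cons.prems(1) by simp
    show "nfm n (Imp c d)" using L_nfm[OF cL] Cons.prems(2) by simp
    fix V assume "\<forall>c\<in>set cs. peval2 V c"
    then show "peval2 V (Imp c d)" using Cons.prems(3)[of V] by simp
  qed
  then show ?case using mp[OF cL] by blast
qed

lemma conseq1:
  assumes "c \<in> L" "nfm n d" "\<And>V. peval2 V c \<Longrightarrow> peval2 V d"
  shows "d \<in> L"
  by (rule conseq[of "[c]" d]) (use assms in simp_all)

lemma conseq2: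
  assumes "c \<in> L" "c' \<in> L" "nfm n d" "\<And>V. peval2 V c \<Longrightarrow> peval2 V c' \<Longrightarrow> peval2 V d"
  shows "d \<in> L"
  by (rule conseq[of "[c, c']" d]) (use assms in simp_all)

lemma mono_dd: assumes "Imp a b \<in> L" shows "Imp (dd n a) (dd n b) \<in> L"
proof (rule conseq[of "map (\<lambda>j. Imp (Dia j a) (Dia j b)) [0..<n]"])
  show "set (map (\<lambda>j. Imp (Dia j a) (Dia j b)) [0..<n]) \<subseteq> L"
    using mono_Dia assms by auto
  show "nfm n (Imp (dd n a) (dd n b))" using L_nfm[OF assms] by (auto simp: dd_def)
  fix V assume "\<forall>c\<in>set (map (\<lambda>j. Imp (Dia j a) (Dia j b)) [0..<n]). peval2 V c"
  then show "peval2 V (Imp (dd n a) (dd n b))" by (auto simp: peval2_dd)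
qed

lemma mono_pow: "Imp a b \<in> L \<Longrightarrow> Imp (diam_pow n l a) (diam_pow n l b) \<in> L"
proof (induction l arbitrary: a b)
  case 0 then show ?case by simp
next
  case (Suc l)
  have "Imp (dd n a) (dd n b) \<in> L" using Suc.prems by (rule mono_dd)
  then show ?case unfolding diam_pow_Suc2 by (rule Suc.IH)
qed

lemma dist_Dia:
  assumes "i < n" "\<forall>y\<in>set ys. nfm n y"
  shows "Imp (Dia i (Disj ys)) (Disj (map (Dia i) ys)) \<in> L"
  using assms(2)
proof (induction ys)
  case Nil
  then show ?case using ax_N[OF assms(1)] by (simp add: Neg_def)
next
  case (Cons y ys)
  let ?s = "\<lambda>j. if j = 0 then y else if j = 1 then Disj ys else Var j"
  have "subst ?s (Imp (Dia i (Or (Var 0) (Var 1))) (Or (Dia i (Var 0)) (Dia i (Var 1)))) \<in> L"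
    using ax_K[OF assms(1)] Cons.prems by (intro subst_L) auto
  then have ax: "Imp (Dia i (Or y (Disj ys))) (Or (Dia i y) (Dia i (Disj ys))) \<in> L"
    by (simp add: subst_Or)
  show ?case
  proof (rule conseq2[OF ax Cons.IH])
    show "\<forall>y\<in>set ys. nfm n y" using Cons.prems by simp
    show "nfm n (Imp (Dia i (Disj (y # ys))) (Disj (map (Dia i) (y # ys))))"
      using Cons.prems assms(1) by (simp del: peval2_simps)
    fix V
    assume "peval2 V (Imp (Dia i (Or y (Disj ys))) (Or (Dia i y) (Dia i (Disj ys))))"
      "peval2 V (Imp (Dia i (Disj ys)) (Disj (map (Dia i) ys)))"
    then show "peval2 V (Imp (Dia i (Disj (y # ys))) (Disj (map (Dia i) (y # ys))))"
      by auto
  qed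
qed

lemma Lcons_Bot: "Bot \<notin> L" using cons by (simp add: consistent_logic_def)


abbreviation "W \<equiv> can_W n L k"

lemma W_kfm: "X \<in> W \<Longrightarrow> a \<in> X \<Longrightarrow> kfm n k a"
  by (auto simp: can_W_def max_cons_def)

lemma W_nfm: "X \<in> W \<Longrightarrow> a \<in> X \<Longrightarrow> nfm n a"
  using W_kfm kfm_nfm by blast

lemma W_cons: "X \<in> W \<Longrightarrow> L_consistent L X"
  by (auto simp: can_W_def max_cons_def)

lemma W_max: "X \<in> W \<Longrightarrow> X \<subseteq> Y \<Longrightarrow> Y \<subseteq> {a. kfm n k a} \<Longrightarrow> L_consistent L Y \<Longrightarrow> Y = X"
  by (auto simp: can_W_def max_cons_def)

lemma W_insert:
  assumes "X \<in> W" "b \<notin> X" "kfm n k b"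
  obtains bs where "set bs \<subseteq> insert b X" "Neg (Conj bs) \<in> L"
proof -
  have "\<not> L_consistent L (insert b X)"
  proof
    assume "L_consistent L (insert b X)"
    then have "insert b X = X" using W_max[OF assms(1), of "insert b X"] assms W_kfm by auto
    then show False using assms by auto
  qed
  then show ?thesis using that by (auto simp: L_consistent_def)
qed

lemma mc_derive:
  assumes X: "X \<in> W" and as: "set as \<subseteq> X" and b: "kfm n k b" and imp: "Imp (Conj as) b \<in> L"
  shows "b \<in> X"
proof (rule ccontr)
  assume "b \<notin> X"
  then obtain bs where bs: "set bs \<subseteq> insert b X" "Neg (Conj bs) \<in> L"
    using W_insert[OF X _ b] by blast
  let ?cs = "as @ filter (\<lambda>c. c \<noteq> b) bs"
  have sub: "set ?cs \<subseteq> X" using as bs by auto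
  have "Neg (Conj ?cs) \<in> L"
  proof (rule conseq2[OF imp bs(2)])
    show "nfm n (Neg (Conj ?cs))" using sub W_nfm[OF X] by auto
    fix V assume "peval2 V (Imp (Conj as) b)" "peval2 V (Neg (Conj bs))"
    then show "peval2 V (Neg (Conj ?cs))" by auto
  qed
  then show False using W_cons[OF X] sub by (auto simp: L_consistent_def)
qed

lemma mc_closed:
  assumes X: "X \<in> W" and as: "set as \<subseteq> X" and b: "kfm n k b"
    and sem: "\<And>V. (\<forall>a\<in>set as. peval2 V a) \<Longrightarrow> peval2 V b"
  shows "b \<in> X"
proof (rule mc_derive[OF X as b])
  show "Imp (Conj as) b \<in> L"
  proof (rule taut)
    show "nfm n (Imp (Conj as) b)" using as W_nfm[OF X] kfm_nfm[OF b] by auto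
    fix V show "peval2 V (Imp (Conj as) b)" using sem[of V] by simp
  qed
qed

lemma mc_imp:
  assumes X: "X \<in> W" and a: "a \<in> X" and ab: "Imp a b \<in> L" and b: "kfm n k b"
  shows "b \<in> X"
proof (rule mc_derive[OF X, of "[a]"])
  show "Imp (Conj [a]) b \<in> L"
  proof (rule conseq1[OF ab])
    show "nfm n (Imp (Conj [a]) b)" using W_nfm[OF X a] kfm_nfm[OF b] by simp
  qed simp
qed (use a b in simp_all)

lemma mc_Bot: "X \<in> W \<Longrightarrow> Bot \<notin> X"
proof
  assume "X \<in> W" "Bot \<in> X"
  moreover have "Neg (Conj [Bot]) \<in> L" by (rule taut) auto
  moreover have "set [Bot] \<subseteq> X" using \<open>Bot \<in> X\<close> by simp
  ultimately show False using W_cons[of X] unfolding L_consistent_def by blast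
qed

lemma mc_Neg:
  assumes X: "X \<in> W" and a: "kfm n k a"
  shows "Neg a \<in> X \<longleftrightarrow> a \<notin> X"
proof
  assume "Neg a \<in> X"
  then show "a \<notin> X" using mc_closed[OF X, of "[a, Neg a]" Bot] mc_Bot[OF X] by auto
next
  assume "a \<notin> X"
  then obtain bs where bs: "set bs \<subseteq> insert a X" "Neg (Conj bs) \<in> L"
    using W_insert[OF X _ a] by blast
  let ?cs = "filter (\<lambda>c. c \<noteq> a) bs"
  show "Neg a \<in> X"
  proof (rule mc_derive[OF X, of ?cs])
    show "set ?cs \<subseteq> X" using bs by auto
    then show "Imp (Conj ?cs) (Neg a) \<in> L"
      using a W_nfm[OF X] kfm_nfm[OF a] by (intro conseq1[OF bs(2)]) auto
  qed (use a in auto)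
qed

lemma mc_Disj:
  assumes X: "X \<in> W" and ys: "\<forall>y\<in>set ys. kfm n k y" and d: "Disj ys \<in> X"
  shows "\<exists>y\<in>set ys. y \<in> X"
proof (rule ccontr)
  assume "\<not> ?thesis"
  then have "set (map Neg ys) \<subseteq> X" using mc_Neg[OF X] ys by auto
  then have "Bot \<in> X" using d by (intro mc_closed[OF X, of "Disj ys # map Neg ys"]) auto
  then show False using mc_Bot[OF X] by simp
qed

lemma mc_Conj: "X \<in> W \<Longrightarrow> set gs \<subseteq> X \<Longrightarrow> Conj gs \<in> X"
  by (rule mc_closed[of X gs]) (auto simp: W_kfm subset_iff)

lemma mc_Conj_mem: "X \<in> W \<Longrightarrow> Conj gs \<in> X \<Longrightarrow> g \<in> set gs \<Longrightarrow> g \<in> X"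
  by (rule mc_closed[of X "[Conj gs]"]) (use W_kfm[of X "Conj gs"] in auto)


lemma lindenbaum:
  assumes G: "\<Gamma> \<subseteq> {a. kfm n k a}" and cG: "L_consistent L \<Gamma>"
  shows "\<exists>X\<in>W. \<Gamma> \<subseteq> X"
proof -
  let ?A = "{Y. \<Gamma> \<subseteq> Y \<and> Y \<subseteq> {a. kfm n k a} \<and> L_consistent L Y}"
  have "\<exists>M\<in>?A. \<forall>X\<in>?A. M \<subseteq> X \<longrightarrow> X = M"
  proof (rule Zorn_Lemma2, intro ballI)
    fix C assume C: "C \<in> chains ?A"
    show "\<exists>U\<in>?A. \<forall>X\<in>C. X \<subseteq> U"
    proof (cases "C = {}")
      case True then show ?thesis using G cG by blast
    next
      case False
      have ch: "subset.chain ?A C" using C by (simp add: chains_alt_def)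
      have sub: "C \<subseteq> ?A" using C by (rule chainsD2)
      have "\<Union>C \<in> ?A"
      proof -
        have "\<Gamma> \<subseteq> \<Union>C" using False sub by blast
        moreover have "\<Union>C \<subseteq> {a. kfm n k a}" using sub by blast
        moreover have "L_consistent L (\<Union>C)"
          unfolding L_consistent_def
        proof (intro allI impI)
          fix as assume "set as \<subseteq> \<Union>C"
          then obtain B where "B \<in> C" "set as \<subseteq> B"
            using finite_subset_Union_chain[OF finite_set _ False ch] by blast
          then show "Neg (Conj as) \<notin> L" using sub unfolding L_consistent_def by blast
        qed
        ultimately show ?thesis by blast
      qed
      then show ?thesis by blast
    qed
  qed
  then obtain M where M: "M \<in> ?A" "\<forall>X\<in>?A. M \<subseteq> X \<longrightarrow> X = M" by blast
  have "M \<in> W" unfolding can_W_def max_cons_def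
  proof (intro CollectI conjI allI impI)
    show "M \<subseteq> {a. kfm n k a}" "L_consistent L M" using M(1) by blast+
    fix Y assume "M \<subseteq> Y" "Y \<subseteq> {a. kfm n k a}" "L_consistent L Y"
    then show "Y = M" using M by blast
  qed
  then show ?thesis using M(1) by blast
qed

abbreviation "Rs \<equiv> can_Rstar n L k"

lemma ex1:
  assumes u: "u \<in> W" and j: "j < n" and G: "\<Gamma> \<subseteq> {a. kfm n k a}"
    and hyp: "\<And>gs. set gs \<subseteq> \<Gamma> \<Longrightarrow> Dia j (Conj gs) \<in> u"
  shows "\<exists>y\<in>W. \<Gamma> \<subseteq> y \<and> can_R n L k j u y"
proof -
  let ?B = "{\<chi>. kfm n k \<chi> \<and> Dia j (Neg \<chi>) \<notin> u}"
  let ?D = "\<Gamma> \<union> ?B"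
  have Dk: "?D \<subseteq> {a. kfm n k a}" using G by blast
  have "L_consistent L ?D" unfolding L_consistent_def
  proof (intro allI impI notI)
    fix bs assume bs: "set bs \<subseteq> ?D" and nb: "Neg (Conj bs) \<in> L"
    let ?gs = "filter (\<lambda>b. b \<in> \<Gamma>) bs"
    let ?hs = "filter (\<lambda>b. b \<notin> \<Gamma>) bs"
    have hsB: "set ?hs \<subseteq> ?B" using bs by auto
    have hk: "\<forall>h\<in>set ?hs. kfm n k h" using hsB by blast
    have gk: "\<forall>g\<in>set ?gs. kfm n k g" using G by auto
    have i1: "Imp (Conj ?gs) (Disj (map Neg ?hs)) \<in> L"
    proof (rule conseq1[OF nb])
      show "nfm n (Imp (Conj ?gs) (Disj (map Neg ?hs)))"
        using hk gk by (simp add: kfm_def)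
      fix V assume "peval2 V (Neg (Conj bs))"
      then show "peval2 V (Imp (Conj ?gs) (Disj (map Neg ?hs)))" by auto
    qed
    have i2: "Imp (Dia j (Conj ?gs)) (Dia j (Disj (map Neg ?hs))) \<in> L"
      by (rule mono_Dia[OF j i1])
    have i3: "Imp (Dia j (Disj (map Neg ?hs))) (Disj (map (Dia j) (map Neg ?hs))) \<in> L"
      by (rule dist_Dia[OF j]) (use hk in \<open>simp add: kfm_def\<close>)
    have "Dia j (Conj ?gs) \<in> u" by (rule hyp) auto
    then have "Dia j (Disj (map Neg ?hs)) \<in> u"
      by (rule mc_imp[OF u _ i2]) (use hk j in simp)
    then have d: "Disj (map (Dia j) (map Neg ?hs)) \<in> u"
      by (rule mc_imp[OF u _ i3]) (use hk j in simp)
    have "\<exists>y\<in>set (map (Dia j) (map Neg ?hs)). y \<in> u"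
      by (rule mc_Disj[OF u _ d]) (use hk j in simp)
    then obtain h where "h \<in> set ?hs" "Dia j (Neg h) \<in> u" by auto
    then show False using hsB by blast
  qed
  then obtain y where y: "y \<in> W" "?D \<subseteq> y" using lindenbaum[OF Dk] by blast
  have "can_R n L k j u y" unfolding can_R_def
  proof (intro conjI allI impI)
    show "u \<in> W" "y \<in> W" using u y by simp_all
    fix a assume ak: "kfm n k a" and ay: "a \<in> y"
    show "Dia j a \<in> u"
    proof (rule ccontr)
      assume na: "Dia j a \<notin> u"
      have "Dia j (Neg (Neg a)) \<notin> u"
      proof
        assume dn: "Dia j (Neg (Neg a)) \<in> u"
        have "Imp (Neg (Neg a)) a \<in> L"
          by (rule taut) (use kfm_nfm[OF ak] in simp_all)
        then have "Imp (Dia j (Neg (Neg a))) (Dia j a) \<in> L" by (rule mono_Dia[OF j])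
        then have "Dia j a \<in> u" using mc_imp[OF u dn] ak j by simp
        then show False using na by simp
      qed
      then have "Neg a \<in> y" using y ak by auto
      then show False using mc_Neg[OF y(1)] ak ay by simp
    qed
  qed
  then show ?thesis using y by blast
qed


lemma taut_Conj_sub:
  assumes "set gs \<subseteq> set G" "\<forall>g\<in>set G. nfm n g"
  shows "Imp (Conj G) (Conj gs) \<in> L"
  by (rule taut) (use assms in auto)

lemma exn:
  assumes "c \<in> W" "\<Gamma> \<subseteq> {a. kfm n k a}"
    "\<And>gs. set gs \<subseteq> \<Gamma> \<Longrightarrow> diam_pow n l (Conj gs) \<in> c"
  shows "\<exists>y\<in>W. \<Gamma> \<subseteq> y \<and> (c, y) \<in> Rs"
  using assms
proof (induction l arbitrary: \<Gamma>)
  case 0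
  have "\<Gamma> \<subseteq> c"
  proof
    fix g assume "g \<in> \<Gamma>"
    then have "Conj [g] \<in> c" using 0(3)[of "[g]"] by (simp del: Conj.simps)
    then show "g \<in> c" using mc_Conj_mem[OF 0(1), of "[g]"] by simp
  qed
  then show ?case using 0(1) by (auto simp: can_Rstar_def)
next
  case (Suc l)
  note c = Suc.prems(1)
  have Gk: "\<And>g. g \<in> \<Gamma> \<Longrightarrow> kfm n k g" using Suc.prems(2) by blast
  let ?D = "{d. \<exists>gs. set gs \<subseteq> \<Gamma> \<and> d = dd n (Conj gs)}"
  have Dk: "?D \<subseteq> {a. kfm n k a}" using Gk by (auto simp: subset_iff)
  have Dh: "diam_pow n l (Conj ds) \<in> c" if ds: "set ds \<subseteq> ?D" for ds
  proof -
    define sel where "sel d = (SOME gs. set gs \<subseteq> \<Gamma> \<and> d = dd n (Conj gs))" for d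
    have sel: "set (sel d) \<subseteq> \<Gamma> \<and> d = dd n (Conj (sel d))" if "d \<in> set ds" for d
    proof -
      have "\<exists>gs. set gs \<subseteq> \<Gamma> \<and> d = dd n (Conj gs)" using that ds by blast
      then show ?thesis unfolding sel_def by (rule someI_ex)
    qed
    define G where "G = concat (map sel ds)"
    have GG: "set G \<subseteq> \<Gamma>" using sel by (auto simp: G_def)
    have Gn: "\<forall>g\<in>set G. nfm n g" using GG Gk kfm_nfm by blast
    have "diam_pow n (Suc l) (Conj G) \<in> c" using Suc.prems(3) GG by blast
    then have p: "diam_pow n l (dd n (Conj G)) \<in> c" by (simp only: diam_pow_Suc2)
    have imp: "Imp (dd n (Conj G)) (Conj ds) \<in> L"
    proof (rule conseq[of "map (\<lambda>d. Imp (dd n (Conj G)) (dd n (Conj (sel d)))) ds"])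
      show "set (map (\<lambda>d. Imp (dd n (Conj G)) (dd n (Conj (sel d)))) ds) \<subseteq> L"
      proof
        fix x assume "x \<in> set (map (\<lambda>d. Imp (dd n (Conj G)) (dd n (Conj (sel d)))) ds)"
        then obtain d where d: "d \<in> set ds" "x = Imp (dd n (Conj G)) (dd n (Conj (sel d)))" by auto
        have "set (sel d) \<subseteq> set G" using d(1) by (auto simp: G_def)
        then have "Imp (Conj G) (Conj (sel d)) \<in> L" using Gn by (rule taut_Conj_sub)
        then show "x \<in> L" using d(2) mono_dd by simp
      qed
      have "\<forall>d\<in>set ds. nfm n d" using ds Dk kfm_nfm by blast
      then show "nfm n (Imp (dd n (Conj G)) (Conj ds))" using Gn nfm_dd by simp
      fix V assume V: "\<forall>x\<in>set (map (\<lambda>d. Imp (dd n (Conj G)) (dd n (Conj (sel d)))) ds). peval2 V x"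
      show "peval2 V (Imp (dd n (Conj G)) (Conj ds))"
      proof (simp only: peval2.simps peval2_simps, intro impI ballI)
        fix d assume "peval2 V (dd n (Conj G))" "d \<in> set ds"
        then have "peval2 V (dd n (Conj (sel d)))" using V by auto
        then show "peval2 V d" using sel[OF \<open>d \<in> set ds\<close>] by simp
      qed
    qed
    have "Imp (diam_pow n l (dd n (Conj G))) (diam_pow n l (Conj ds)) \<in> L"
      using imp by (rule mono_pow)
    moreover have "kfm n k (diam_pow n l (Conj ds))"
      using ds Dk by (intro kfm_diam_pow) auto
    ultimately show ?thesis using mc_imp[OF c p] by blast
  qed
  obtain u where u: "u \<in> W" "?D \<subseteq> u" "(c, u) \<in> Rs" using Suc.IH[OF c Dk Dh] by blast
  have "\<exists>j<n. \<forall>gs. set gs \<subseteq> \<Gamma> \<longrightarrow> Dia j (Conj gs) \<in> u"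
  proof (rule ccontr)
    assume "\<not> ?thesis"
    then have ex: "\<forall>j<n. \<exists>gs. set gs \<subseteq> \<Gamma> \<and> Dia j (Conj gs) \<notin> u" by blast
    define sel where "sel j = (SOME gs. set gs \<subseteq> \<Gamma> \<and> Dia j (Conj gs) \<notin> u)" for j
    have sel: "set (sel j) \<subseteq> \<Gamma> \<and> Dia j (Conj (sel j)) \<notin> u" if "j < n" for j
      unfolding sel_def by (rule someI_ex) (use ex that in blast)
    define G where "G = concat (map sel [0..<n])"
    have GG: "set G \<subseteq> \<Gamma>" using sel by (force simp: G_def)
    have Gn: "\<forall>g\<in>set G. nfm n g" using GG Gk kfm_nfm by blast
    have Gk': "\<forall>g\<in>set G. kfm n k g" using GG Gk by blast
    have "dd n (Conj G) \<in> u" using u(2) GG by blast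
    then have "Disj (map (\<lambda>j. Dia j (Conj G)) [0..<n]) \<in> u" by (simp add: dd_def)
    then have "\<exists>y\<in>set (map (\<lambda>j. Dia j (Conj G)) [0..<n]). y \<in> u"
      by (rule mc_Disj[OF u(1), rotated]) (use Gk' in simp)
    then obtain j where j: "j < n" "Dia j (Conj G) \<in> u" by auto
    have "set (sel j) \<subseteq> set G" using j(1) by (auto simp: G_def)
    then have "Imp (Conj G) (Conj (sel j)) \<in> L" using Gn by (rule taut_Conj_sub)
    then have "Imp (Dia j (Conj G)) (Dia j (Conj (sel j))) \<in> L" by (rule mono_Dia[OF j(1)])
    moreover have "kfm n k (Dia j (Conj (sel j)))" using sel[OF j(1)] Gk j(1) by auto
    ultimately have "Dia j (Conj (sel j)) \<in> u" using mc_imp[OF u(1) j(2)] by blast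
    then show False using sel[OF j(1)] by blast
  qed
  then obtain j where j: "j < n" "\<forall>gs. set gs \<subseteq> \<Gamma> \<longrightarrow> Dia j (Conj gs) \<in> u" by blast
  obtain y where y: "y \<in> W" "\<Gamma> \<subseteq> y" "can_R n L k j u y"
    using ex1[OF u(1) j(1) Suc.prems(2)] j(2) by blast
  have "(u, y) \<in> {(x, y). \<exists>i<n. can_R n L k i x y}" using y(3) j(1) by blast
  then have "(c, y) \<in> Rs" using u(3) unfolding can_Rstar_def by (rule rtrancl_into_rtrancl[rotated])
  then show ?case using y by blast
qed


lemma Rs_to_ex:
  assumes "(c, y) \<in> Rs" "\<psi> \<in> y" "kfm n k \<psi>"
  shows "\<exists>l. diam_pow n l \<psi> \<in> c"
  using assms(1) unfolding can_Rstar_def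
proof (induction rule: converse_rtrancl_induct)
  case base
  show ?case using assms(2) by (metis diam_pow.simps(1))
next
  case (step c u)
  then obtain l where l: "diam_pow n l \<psi> \<in> u" by blast
  from step(1) obtain i where i: "i < n" "can_R n L k i c u" by blast
  have cW: "c \<in> W" and k: "kfm n k (diam_pow n l \<psi>)" using i(2) assms(3) kfm_diam_pow
    by (auto simp: can_R_def)
  have d: "Dia i (diam_pow n l \<psi>) \<in> c" using i(2) l k by (simp add: can_R_def)
  have "Imp (Dia i (diam_pow n l \<psi>)) (dd n (diam_pow n l \<psi>)) \<in> L"
    by (rule taut) (use k kfm_nfm[OF k] i(1) nfm_dd in \<open>auto simp: peval2_dd\<close>)
  then have "dd n (diam_pow n l \<psi>) \<in> c" using mc_imp[OF cW d] k by simp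
  then have "diam_pow n (Suc l) \<psi> \<in> c" by (simp only: diam_pow_Suc')
  then show ?case by blast
qed

context
  fixes m :: nat
  assumes ptax: "Imp (diam_pow n (Suc m) (Var 0)) (diam_le n m (Var 0)) \<in> L"
begin

lemma pt_reduce:
  assumes c: "c \<in> W" and psi: "kfm n k \<psi>"
  shows "diam_pow n l \<psi> \<in> c \<Longrightarrow> \<exists>l'\<le>m. diam_pow n l' \<psi> \<in> c"
proof (induction l rule: less_induct)
  case (less l)
  show ?case
  proof (cases "l \<le> m")
    case True then show ?thesis using less.prems by blast
  next
    case False
    define r where "r = l - Suc m"
    have l: "l = Suc m + r" using False by (simp add: r_def)
    define t where "t = diam_pow n r \<psi>"
    have tk: "kfm n k t" using psi kfm_diam_pow by (simp add: t_def)
    let ?s = "\<lambda>j. if j = 0 then t else Var j"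
    have "subst ?s (Imp (diam_pow n (Suc m) (Var 0)) (diam_le n m (Var 0))) \<in> L"
      by (rule subst_L[OF _ ptax]) (use kfm_nfm[OF tk] in simp)
    then have ax: "Imp (diam_pow n (Suc m) t) (Disj (map (\<lambda>i. diam_pow n i t) [0..<Suc m])) \<in> L"
      by (simp add: subst_diam_pow diam_le_def subst_Disj comp_def del: diam_pow.simps)
    have "diam_pow n (Suc m) t = diam_pow n l \<psi>" by (simp only: l t_def diam_pow_add)
    then have "diam_pow n (Suc m) t \<in> c" using less.prems by simp
    then have "Disj (map (\<lambda>i. diam_pow n i t) [0..<Suc m]) \<in> c"
      by (rule mc_imp[OF c _ ax]) (use tk kfm_diam_pow in simp)
    then have "\<exists>y\<in>set (map (\<lambda>i. diam_pow n i t) [0..<Suc m]). y \<in> c"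
      by (rule mc_Disj[OF c, rotated]) (use tk kfm_diam_pow in simp)
    then obtain i where i: "i < Suc m" "diam_pow n i t \<in> c" by (auto simp del: upt_Suc)
    have "diam_pow n (i + r) \<psi> \<in> c" using i(2) by (simp only: t_def diam_pow_add)
    moreover have "i + r < l" using i(1) l by simp
    ultimately show ?thesis using less.IH by blast
  qed
qed

lemma Rs_P:
  assumes "c \<in> W" "y \<in> W" "(c, y) \<in> Rs" "\<psi> \<in> y"
  shows "\<exists>l\<le>m. diam_pow n l \<psi> \<in> c"
proof -
  have k: "kfm n k \<psi>" using W_kfm assms by blast
  obtain l where "diam_pow n l \<psi> \<in> c" using Rs_to_ex[OF assms(3,4) k] by blast
  then show ?thesis using pt_reduce[OF assms(1) k] by blast
qed

lemma P_Rs: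
  assumes c: "c \<in> W" and y: "y \<in> W" and P: "\<And>\<psi>. \<psi> \<in> y \<Longrightarrow> \<exists>l\<le>m. diam_pow n l \<psi> \<in> c"
  shows "(c, y) \<in> Rs"
proof -
  have yk: "\<And>g. g \<in> y \<Longrightarrow> kfm n k g" using W_kfm[OF y] by blast
  have "\<exists>l\<le>m. \<forall>gs. set gs \<subseteq> y \<longrightarrow> diam_pow n l (Conj gs) \<in> c"
  proof (rule ccontr)
    assume "\<not> ?thesis"
    then have ex: "\<forall>l\<le>m. \<exists>gs. set gs \<subseteq> y \<and> diam_pow n l (Conj gs) \<notin> c" by blast
    define sel where "sel l = (SOME gs. set gs \<subseteq> y \<and> diam_pow n l (Conj gs) \<notin> c)" for l
    have sel: "set (sel l) \<subseteq> y \<and> diam_pow n l (Conj (sel l)) \<notin> c" if "l \<le> m" for l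
      unfolding sel_def by (rule someI_ex) (use ex that in blast)
    define G where "G = concat (map sel [0..<Suc m])"
    have GG: "set G \<subseteq> y"
    proof
      fix g assume "g \<in> set G"
      then obtain l where "l < Suc m" "g \<in> set (sel l)" by (auto simp del: upt_Suc simp: G_def)
      then show "g \<in> y" using sel[of l] by auto
    qed
    have Gn: "\<forall>g\<in>set G. nfm n g" using GG yk kfm_nfm by blast
    have "Conj G \<in> y" using mc_Conj[OF y GG] .
    then obtain l where l: "l \<le> m" "diam_pow n l (Conj G) \<in> c" using P by blast
    have "l \<in> {0..<Suc m}" using l(1) by simp
    then have "set (sel l) \<subseteq> set G" by (auto simp del: upt_Suc simp: G_def)
    then have "Imp (Conj G) (Conj (sel l)) \<in> L" using Gn by (rule taut_Conj_sub)
    then have "Imp (diam_pow n l (Conj G)) (diam_pow n l (Conj (sel l))) \<in> L" by (rule mono_pow)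
    moreover have "kfm n k (diam_pow n l (Conj (sel l)))"
      using sel[OF l(1)] yk by (intro kfm_diam_pow) auto
    ultimately have "diam_pow n l (Conj (sel l)) \<in> c" using mc_imp[OF c l(2)] by blast
    then show False using sel[OF l(1)] by blast
  qed
  then obtain l where "\<forall>gs. set gs \<subseteq> y \<longrightarrow> diam_pow n l (Conj gs) \<in> c" by blast
  then obtain y' where y': "y' \<in> W" "y \<subseteq> y'" "(c, y') \<in> Rs"
    using exn[OF c, of y l] yk by blast
  have "y' = y" using W_max[OF y y'(2)] W_kfm[OF y'(1)] W_cons[OF y'(1)] by blast
  then show ?thesis using y' by simp
qed


lemma Rs_trans: "(a, b) \<in> Rs \<Longrightarrow> (b, c) \<in> Rs \<Longrightarrow> (a, c) \<in> Rs"
  unfolding can_Rstar_def by (rule rtrancl_trans)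

lemma Rs_refl: "(a, a) \<in> Rs"
  unfolding can_Rstar_def by simp

lemma chain_ub:
  assumes x: "x \<in> W" and phik: "kfm n k \<phi>" and phix: "\<phi> \<in> x"
    and CV: "C \<subseteq> {y. (x, y) \<in> Rs} \<inter> {y \<in> W. \<phi> \<in> y}"
    and tot: "\<And>a b. a \<in> C \<Longrightarrow> b \<in> C \<Longrightarrow> (a, b) \<in> Rs \<or> (b, a) \<in> Rs"
  shows "\<exists>w\<in>{y. (x, y) \<in> Rs} \<inter> {y \<in> W. \<phi> \<in> y}. \<forall>c\<in>C. (c, w) \<in> Rs"
proof (cases "C = {}")
  case True
  then show ?thesis using x phix Rs_refl by blast
next
  case False
  then obtain c0 where c0: "c0 \<in> C" by blast
  have CW: "\<And>c. c \<in> C \<Longrightarrow> c \<in> W" using CV by blast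
  let ?T = "{\<chi>. kfm n k \<chi> \<and> (\<exists>c\<in>C. \<forall>l\<le>m. diam_pow n l (Neg \<chi>) \<notin> c)}"
  let ?G = "insert \<phi> ?T"
  have persist: "\<chi> \<in> c'" if p: "c \<in> C" "kfm n k \<chi>" "\<forall>l\<le>m. diam_pow n l (Neg \<chi>) \<notin> c"
      "c' \<in> W" "(c, c') \<in> Rs" for c c' \<chi>
  proof (rule ccontr)
    assume "\<chi> \<notin> c'"
    then have "Neg \<chi> \<in> c'" using mc_Neg[OF p(4) p(2)] by simp
    then obtain l where "l \<le> m" "diam_pow n l (Neg \<chi>) \<in> c"
      using Rs_P[OF CW[OF p(1)] p(4) p(5)] by blast
    then show False using p(3) by blast
  qed
  have claim: "\<exists>c\<in>C. \<forall>c'\<in>C. (c, c') \<in> Rs \<longrightarrow> set bs \<subseteq> c'" if "set bs \<subseteq> ?G" for bs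
    using that
  proof (induction bs)
    case Nil then show ?case using c0 by auto
  next
    case (Cons b bs)
    then obtain c1 where c1: "c1 \<in> C" "\<forall>c'\<in>C. (c1, c') \<in> Rs \<longrightarrow> set bs \<subseteq> c'" by auto
    have "\<exists>c2\<in>C. \<forall>c'\<in>C. (c2, c') \<in> Rs \<longrightarrow> b \<in> c'"
    proof (cases "b = \<phi>")
      case True then show ?thesis using c1(1) CV by blast
    next
      case False
      then have "b \<in> ?T" using Cons.prems by simp
      then obtain c2 where "c2 \<in> C" "kfm n k b" "\<forall>l\<le>m. diam_pow n l (Neg b) \<notin> c2" by blast
      then show ?thesis using persist CW by blast
    qed
    then obtain c2 where c2: "c2 \<in> C" "\<forall>c'\<in>C. (c2, c') \<in> Rs \<longrightarrow> b \<in> c'" by blast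
    from tot[OF c1(1) c2(1)] show ?case
    proof
      assume "(c1, c2) \<in> Rs"
      then have "\<forall>c'\<in>C. (c2, c') \<in> Rs \<longrightarrow> set (b # bs) \<subseteq> c'" using c1 c2 Rs_trans by auto
      then show ?thesis using c2(1) by blast
    next
      assume "(c2, c1) \<in> Rs"
      then have "\<forall>c'\<in>C. (c1, c') \<in> Rs \<longrightarrow> set (b # bs) \<subseteq> c'" using c1 c2 Rs_trans by auto
      then show ?thesis using c1(1) by blast
    qed
  qed
  have Gk: "?G \<subseteq> {a. kfm n k a}" using phik by blast
  have "L_consistent L ?G" unfolding L_consistent_def
  proof (intro allI impI)
    fix bs assume "set bs \<subseteq> ?G"
    then obtain c where "c \<in> C" "\<forall>c'\<in>C. (c, c') \<in> Rs \<longrightarrow> set bs \<subseteq> c'" using claim by blast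
    then have "set bs \<subseteq> c" "c \<in> W" using Rs_refl CW by blast+
    then show "Neg (Conj bs) \<notin> L" using W_cons unfolding L_consistent_def by blast
  qed
  then obtain y where y: "y \<in> W" "?G \<subseteq> y" using lindenbaum[OF Gk] by blast
  have cy: "(c, y) \<in> Rs" if c: "c \<in> C" for c
  proof (rule P_Rs[OF CW[OF c] y(1)])
    fix \<psi> assume psi: "\<psi> \<in> y"
    have pk: "kfm n k \<psi>" using W_kfm[OF y(1) psi] .
    show "\<exists>l\<le>m. diam_pow n l \<psi> \<in> c"
    proof (rule ccontr)
      assume na: "\<not> ?thesis"
      have "\<forall>l\<le>m. diam_pow n l (Neg (Neg \<psi>)) \<notin> c"
      proof (intro allI impI notI)
        fix l assume l: "l \<le> m" and d: "diam_pow n l (Neg (Neg \<psi>)) \<in> c"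
        have "Imp (Neg (Neg \<psi>)) \<psi> \<in> L"
          by (rule taut) (use kfm_nfm[OF pk] in simp_all)
        then have "Imp (diam_pow n l (Neg (Neg \<psi>))) (diam_pow n l \<psi>) \<in> L" by (rule mono_pow)
        then have "diam_pow n l \<psi> \<in> c" using mc_imp[OF CW[OF c] d] kfm_diam_pow[OF pk] by blast
        then show False using na l by blast
      qed
      then have "Neg \<psi> \<in> ?T" using pk c by auto
      then have "Neg \<psi> \<in> y" using y(2) by blast
      then show False using mc_Neg[OF y(1) pk] psi by simp
    qed
  qed
  have "y \<in> {y. (x, y) \<in> Rs} \<inter> {y \<in> W. \<phi> \<in> y}"
  proof -
    have "(x, c0) \<in> Rs" using c0 CV by blast
    then have "(x, y) \<in> Rs" using Rs_trans cy[OF c0] by blast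
    then show ?thesis using y by blast
  qed
  then show ?thesis using cy by blast
qed

lemma max_exists:
  assumes x: "x \<in> W" and phik: "kfm n k \<phi>" and phix: "\<phi> \<in> x"
  shows "\<exists>z. max_elem Rs ({y. (x, y) \<in> Rs} \<inter> {y \<in> W. \<phi> \<in> y}) z"
proof -
  define V where "V = {y. (x, y) \<in> Rs} \<inter> {y \<in> W. \<phi> \<in> y}"
  define U where "U z = {w\<in>V. (z, w) \<in> Rs}" for z
  let ?A = "{V - U z | z. z \<in> V}"
  have UU: "U b \<subseteq> U a" if "(a, b) \<in> Rs" for a b
    using that Rs_trans unfolding U_def by blast
  have "\<exists>M\<in>?A. \<forall>X\<in>?A. M \<subseteq> X \<longrightarrow> X = M"
  proof (rule Zorn_Lemma2, intro ballI)
    fix C assume C: "C \<in> chains ?A"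
    let ?Y = "{z\<in>V. V - U z \<in> C}"
    have tot: "(a, b) \<in> Rs \<or> (b, a) \<in> Rs" if "a \<in> ?Y" "b \<in> ?Y" for a b
    proof -
      have ab: "a \<in> V" "b \<in> V" "V - U a \<in> C" "V - U b \<in> C" using that by auto
      have aa: "a \<in> U a" "b \<in> U b" using ab Rs_refl unfolding U_def by auto
      from chainsD[OF C ab(3) ab(4)] show ?thesis
      proof
        assume "V - U a \<subseteq> V - U b"
        then have "b \<in> U a" using aa ab by blast
        then show ?thesis unfolding U_def by blast
      next
        assume "V - U b \<subseteq> V - U a"
        then have "a \<in> U b" using aa ab by blast
        then show ?thesis unfolding U_def by blast
      qed
    qed
    have "?Y \<subseteq> V" by blast
    then obtain w where w: "w \<in> V" "\<forall>z\<in>?Y. (z, w) \<in> Rs"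
      using chain_ub[OF x phik phix, of ?Y] tot unfolding V_def by blast
    show "\<exists>U'\<in>?A. \<forall>X\<in>C. X \<subseteq> U'"
    proof (intro bexI ballI)
      show "V - U w \<in> ?A" using w(1) by blast
      fix X assume "X \<in> C"
      then obtain z where z: "z \<in> V" "X = V - U z" using chainsD2[OF C] by blast
      then have "z \<in> ?Y" using \<open>X \<in> C\<close> by blast
      then have "U w \<subseteq> U z" using w(2) UU by blast
      then show "X \<subseteq> V - U w" using z by blast
    qed
  qed
  then obtain z where z: "z \<in> V" "\<forall>X\<in>?A. V - U z \<subseteq> X \<longrightarrow> X = V - U z" by blast
  have "max_elem Rs V z" unfolding max_elem_def
  proof (intro conjI ballI impI)
    show "z \<in> V" by (rule z(1))
    fix y assume y: "y \<in> V" "(z, y) \<in> Rs"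
    have "V - U z \<subseteq> V - U y" using UU[OF y(2)] by blast
    then have eq: "V - U y = V - U z" using z(2) y(1) by blast
    have "z \<in> U z" using z(1) Rs_refl unfolding U_def by blast
    show "(y, z) \<in> Rs"
    proof (rule ccontr)
      assume "(y, z) \<notin> Rs"
      then have "z \<in> V - U y" using z(1) unfolding U_def by blast
      then show False using eq \<open>z \<in> U z\<close> by blast
    qed
  qed
  then show ?thesis unfolding V_def by blast
qed

end

end


theorem proposition3p2:
  fixes n :: nat and L :: "fm set" and k :: enat and x :: "fm set" and \<phi> :: fm
  assumes "normal_logic n L" and "consistent_logic L" and "pretransitive n L"
    and "x \<in> can_W n L k" and "kfm n k \<phi>" and "\<phi> \<in> x"
  shows "\<exists>z. max_elem (can_Rstar n L k)
              ({y. (x, y) \<in> can_Rstar n L k} \<inter> {y \<in> can_W n L k. \<phi> \<in> y}) z"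
proof -
  interpret NL n L k using assms(1,2) by unfold_locales
  obtain m where m: "Imp (diam_pow n (Suc m) (Var 0)) (diam_le n m (Var 0)) \<in> L"
    using assms(3) unfolding pretransitive_def by blast
  show ?thesis using max_exists[OF m assms(4,5,6)] .
qed

end
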